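(* Let $\mathcal{X}$ be a context space, $\mathcal{A}$ a finite arm set, $\hat f:\mathcal{X}\times\mathcal{A}\to[0,1]$, $\hat\pi_{\text{con}}:\mathcal{X}\to\mathcal{A}$, $\hat U_{\text{con}}>0$, $\hat g:\mathcal{X}\to 2^{\mathcal{A}}$, $\beta_{\max}\in(0,1)$ and $\eta\ge 1$. For $\zeta>0$ let $C(x,\zeta):=\{a\in\hat g(x):\hat f(x,\hat\pi_{\text{con}}(x))-\hat f(x,a)\le\hat U_{\text{con}}/\zeta\}$ (assumed nonempty), let $\mathrm{Unif}_\zeta(\cdot\mid x)$ be the uniform distribution on $C(x,\zeta)$, and define $$p(a\mid x):=(1-\beta_{\max})\mathrm{Unif}_{\beta_{\max}/\eta}(a\mid x)+\int_0^{\beta_{\max}}\mathrm{Unif}_{\beta/\eta}(a\mid x)\,d\beta .$$ Then for all $x\in\mathcal{X}$ and $a\in\mathcal{A}$: if $a\in C(x,\beta_{\max}/\eta)$, then $p(a\mid x)\ge\frac{1-\beta_{\max}}{|C(x,\beta_{\max}/\eta)|}+\frac{\beta_{\max}}{|\hat g(x)|}\ge\frac{1}{|\hat g(x)|}$; if $a\notin C(x,\beta_{\max}/\eta)$ and $a\in\hat g(x)$, then $p(a\mid x)\ge\frac{\eta}{|\hat g(x)|}\frac{\hat U_{\text{con}}}{\hat f(x,\hat\pi_{\text{con}}(x))-\hat f(x,a)}\ge\frac{\eta\hat U_{\text{con}}}{|\hat g(x)|}$; and otherwise $p(a\mid x)\ge 0$. *)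

theory Defs
  imports "HOL-Analysis.Analysis"
begin

definition cand_set ::
  "('x \<Rightarrow> 'a \<Rightarrow> real) \<Rightarrow> ('x \<Rightarrow> 'a) \<Rightarrow> real \<Rightarrow> ('x \<Rightarrow> 'a set) \<Rightarrow> 'x \<Rightarrow> real \<Rightarrow> 'a set"
where
  "cand_set f pic U g x \<zeta> = {a \<in> g x. f x (pic x) - f x a \<le> U / \<zeta>}"

definition unif_pol ::
  "('x \<Rightarrow> 'a \<Rightarrow> real) \<Rightarrow> ('x \<Rightarrow> 'a) \<Rightarrow> real \<Rightarrow> ('x \<Rightarrow> 'a set) \<Rightarrow> real \<Rightarrow> 'x \<Rightarrow> 'a \<Rightarrow> real"
where
  "unif_pol f pic U g \<zeta> x a =
     (if a \<in> cand_set f pic U g x \<zeta> then 1 / real (card (cand_set f pic U g x \<zeta>)) else 0)"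

definition mix_pol ::
  "('x \<Rightarrow> 'a \<Rightarrow> real) \<Rightarrow> ('x \<Rightarrow> 'a) \<Rightarrow> real \<Rightarrow> ('x \<Rightarrow> 'a set) \<Rightarrow> real \<Rightarrow> real \<Rightarrow> 'x \<Rightarrow> 'a \<Rightarrow> real"
where
  "mix_pol f pic U g \<beta>max \<eta> x a =
     (1 - \<beta>max) * unif_pol f pic U g (\<beta>max / \<eta>) x a
     + integral {0..\<beta>max} (\<lambda>\<beta>. unif_pol f pic U g (\<beta> / \<eta>) x a)"

end

theory Submission
  imports Defs
begin

lemma gen_int:
  fixes h m :: "real \<Rightarrow> real"
  assumes c: "0 \<le> c" "c \<le> b" and mono: "mono_on {0..c} m"
    and hm: "\<And>t. t \<in> {0<..c} \<Longrightarrow> h t = m t"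
    and h0: "\<And>t. t \<in> {c<..b} \<Longrightarrow> h t = 0"
    and mL: "\<And>t. t \<in> {0..c} \<Longrightarrow> L \<le> m t"
  shows "h integrable_on {0..b} \<and> c * L \<le> integral {0..b} h"
proof -
  have mi: "m integrable_on {0..c}" using mono by (rule integrable_on_mono_on)
  have hi1: "h integrable_on {0..c}"
    by (rule integrable_spike[OF mi, of "{0}"]) (auto simp: hm)
  have e1: "integral {0..c} m = integral {0..c} h"
    by (rule integral_spike[of "{0}"]) (auto simp: hm)
  have hi2: "h integrable_on {c..b}"
    by (rule integrable_spike[OF integrable_0, of "{c}"]) (auto simp: h0)
  have e2: "integral {c..b} h = 0"
    using integral_spike[of "{c}" "{c..b}" h "\<lambda>_. 0"] by (auto simp: h0)
  have hi: "h integrable_on {0..b}" using Henstock_Kurzweil_Integration.integrable_combine[OF c hi1 hi2] .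
  have "integral {0..c} (\<lambda>_. L) \<le> integral {0..c} m"
    by (rule integral_le[OF integrable_const_ivl mi]) (use mL in auto)
  hence "c * L \<le> integral {0..c} m" using c by simp
  moreover have "integral {0..c} h + integral {c..b} h = integral {0..b} h"
    using Henstock_Kurzweil_Integration.integral_combine[OF c hi] .
  ultimately show ?thesis using hi e1 e2 by simp
qed

theorem lemmaH4:
  fixes A :: "'a set"
    and f :: "'x \<Rightarrow> 'a \<Rightarrow> real"
    and pic :: "'x \<Rightarrow> 'a"
    and U :: real
    and g :: "'x \<Rightarrow> 'a set"
    and \<beta>max \<eta> :: real
    and x :: 'x and a :: 'a
  assumes finA: "finite A"
    and f_range: "\<And>x a. a \<in> A \<Longrightarrow> f x a \<in> {0..1}"
    and pic_A: "\<And>x. pic x \<in> A"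
    and U_pos: "U > 0"
    and g_A: "\<And>x. g x \<subseteq> A"
    and \<beta>max: "0 < \<beta>max" "\<beta>max < 1"
    and \<eta>: "\<eta> \<ge> 1"
    and C_ne: "\<And>x \<zeta>. \<zeta> > 0 \<Longrightarrow> cand_set f pic U g x \<zeta> \<noteq> {}"
    and aA: "a \<in> A"
  shows
    "(a \<in> cand_set f pic U g x (\<beta>max / \<eta>) \<longrightarrow>
        mix_pol f pic U g \<beta>max \<eta> x a
          \<ge> (1 - \<beta>max) / real (card (cand_set f pic U g x (\<beta>max / \<eta>)))
             + \<beta>max / real (card (g x))
      \<and> (1 - \<beta>max) / real (card (cand_set f pic U g x (\<beta>max / \<eta>)))
             + \<beta>max / real (card (g x)) \<ge> 1 / real (card (g x)))
   \<and> (a \<notin> cand_set f pic U g x (\<beta>max / \<eta>) \<and> a \<in> g x \<longrightarrow>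
        mix_pol f pic U g \<beta>max \<eta> x a
          \<ge> \<eta> / real (card (g x)) * (U / (f x (pic x) - f x a))
      \<and> \<eta> / real (card (g x)) * (U / (f x (pic x) - f x a)) \<ge> \<eta> * U / real (card (g x)))
   \<and> mix_pol f pic U g \<beta>max \<eta> x a \<ge> 0"
  proof -
  define C where "C = (\<lambda>z. cand_set f pic U g x z)"
  define G where "G = g x"
  define D where "D = f x (pic x) - f x a"
  define h where "h = (\<lambda>t. unif_pol f pic U g (t / \<eta>) x a)"
  have mixeq: "mix_pol f pic U g \<beta>max \<eta> x a = (1 - \<beta>max) * unif_pol f pic U g (\<beta>max / \<eta>) x a + integral {0..\<beta>max} h"
    unfolding mix_pol_def h_def ..
  have finG: "finite G" using finA g_A G_def finite_subset by blast
  have CG: "C z \<subseteq> G" for z unfolding C_def G_def cand_set_def by auto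
  have finC: "finite (C z)" for z using CG finG finite_subset by blast
  have cardC: "1 \<le> card (C z) \<and> card (C z) \<le> card G" if "z > 0" for z
  proof -
    have "C z \<noteq> {}" using C_ne[OF that] C_def by simp
    hence "card (C z) \<noteq> 0" using finC by simp
    thus ?thesis using card_mono[OF finG CG] by simp
  qed
  have Gpos: "card G \<ge> 1" using cardC[of 1] by simp
  have anti: "C z2 \<subseteq> C z1" if "0 < z1" "z1 \<le> z2" for z1 z2
  proof -
    have "U / z2 \<le> U / z1" using that U_pos by (simp add: frac_le)
    thus ?thesis unfolding C_def cand_set_def by auto
  qed
  have mem: "a \<in> C (t / \<eta>) \<longleftrightarrow> a \<in> G \<and> D * t \<le> U * \<eta>" if "t > 0" for t
  proof -
    have "U / (t / \<eta>) = U * \<eta> / t" by simp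
    moreover have "D \<le> U * \<eta> / t \<longleftrightarrow> D * t \<le> U * \<eta>" using that by (simp add: pos_le_divide_eq)
    ultimately show ?thesis unfolding C_def cand_set_def G_def D_def by auto
  qed
  have hval: "h t = (if a \<in> C (t / \<eta>) then 1 / real (card (C (t / \<eta>))) else 0)" for t
    unfolding h_def unif_pol_def C_def ..
  define m where "m = (\<lambda>t::real. if t \<le> 0 then 1 / real (card G) else 1 / real (card (C (t / \<eta>))))"
  have mL: "1 / real (card G) \<le> m t" for t
  proof (cases "t \<le> 0")
    case False
    hence "1 \<le> card (C (t / \<eta>))" "card (C (t / \<eta>)) \<le> card G" using cardC[of "t / \<eta>"] \<eta> by auto
    thus ?thesis using False unfolding m_def by (simp add: frac_le)
  qed (simp add: m_def)
  have mmono: "mono_on {0..c} m" for c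
  proof (rule mono_onI)
    fix s t assume st: "s \<in> {0..c}" "t \<in> {0..c}" "s \<le> t"
    show "m s \<le> m t"
    proof (cases "s \<le> 0")
      case True thus ?thesis using mL[of t] unfolding m_def by simp
    next
      case False
      hence sub: "C (t / \<eta>) \<subseteq> C (s / \<eta>)" using anti[of "s / \<eta>" "t / \<eta>"] st \<eta> by (simp add: divide_right_mono)
      have "1 \<le> card (C (t / \<eta>))" using cardC[of "t / \<eta>"] \<eta> False st by auto
      moreover have "card (C (t / \<eta>)) \<le> card (C (s / \<eta>))" using card_mono[OF finC sub] .
      ultimately show ?thesis using False st unfolding m_def by (simp add: frac_le)
    qed
  qed
  have unif_nn: "unif_pol f pic U g z x a \<ge> 0" for z unfolding unif_pol_def by simp
  have P1: "a \<in> C (\<beta>max / \<eta>) \<longrightarrow>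
        mix_pol f pic U g \<beta>max \<eta> x a
          \<ge> (1 - \<beta>max) / real (card (C (\<beta>max / \<eta>))) + \<beta>max / real (card G)
      \<and> (1 - \<beta>max) / real (card (C (\<beta>max / \<eta>))) + \<beta>max / real (card G) \<ge> 1 / real (card G)"
  proof
    assume aC: "a \<in> C (\<beta>max / \<eta>)"
    have "h integrable_on {0..\<beta>max} \<and> \<beta>max * (1 / real (card G)) \<le> integral {0..\<beta>max} h"
    proof (rule gen_int[OF _ _ mmono])
      fix t assume t: "t \<in> {0<..\<beta>max}"
      hence "C (\<beta>max / \<eta>) \<subseteq> C (t / \<eta>)" using anti[of "t / \<eta>" "\<beta>max / \<eta>"] \<eta> by (simp add: divide_right_mono)
      thus "h t = m t" using aC t unfolding hval m_def by auto
    qed (use \<beta>max mL in auto)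
    hence I: "\<beta>max / real (card G) \<le> integral {0..\<beta>max} h" by simp
    have u: "unif_pol f pic U g (\<beta>max / \<eta>) x a = 1 / real (card (C (\<beta>max / \<eta>)))"
      using aC unfolding unif_pol_def C_def by simp
    have cc: "1 \<le> card (C (\<beta>max / \<eta>))" "card (C (\<beta>max / \<eta>)) \<le> card G" using cardC[of "\<beta>max / \<eta>"] \<beta>max \<eta> by auto
    have "(1 - \<beta>max) / real (card G) \<le> (1 - \<beta>max) / real (card (C (\<beta>max / \<eta>)))"
      using cc \<beta>max by (intro divide_left_mono) auto
    moreover have "(1 - \<beta>max) / real (card G) + \<beta>max / real (card G) = 1 / real (card G)"
      by (simp add: add_divide_distrib[symmetric])
    ultimately show "mix_pol f pic U g \<beta>max \<eta> x a
          \<ge> (1 - \<beta>max) / real (card (C (\<beta>max / \<eta>))) + \<beta>max / real (card G)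
      \<and> (1 - \<beta>max) / real (card (C (\<beta>max / \<eta>))) + \<beta>max / real (card G) \<ge> 1 / real (card G)"
      using I u mixeq by simp
  qed
  have P2: "a \<notin> C (\<beta>max / \<eta>) \<and> a \<in> G \<longrightarrow>
        mix_pol f pic U g \<beta>max \<eta> x a \<ge> \<eta> / real (card G) * (U / D)
      \<and> \<eta> / real (card G) * (U / D) \<ge> \<eta> * U / real (card G)"
  proof
    assume a: "a \<notin> C (\<beta>max / \<eta>) \<and> a \<in> G"
    have "\<not> D * \<beta>max \<le> U * \<eta>" using a mem[of \<beta>max] \<beta>max by simp
    hence Dgt: "D * \<beta>max > U * \<eta>" by simp
    have Dpos: "D > 0"
    proof (rule ccontr)
      assume "\<not> D > 0"
      hence "D * \<beta>max \<le> 0" using \<beta>max by (simp add: mult_nonpos_nonneg)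
      thus False using Dgt U_pos \<eta> by (smt (verit) mult_pos_pos)
    qed
    define c where "c = U * \<eta> / D"
    have c0: "0 \<le> c" using U_pos \<eta> Dpos by (simp add: c_def)
    have cb: "c \<le> \<beta>max" using Dgt Dpos by (simp add: c_def pos_divide_le_eq mult.commute)
    have "h integrable_on {0..\<beta>max} \<and> c * (1 / real (card G)) \<le> integral {0..\<beta>max} h"
    proof (rule gen_int[OF c0 cb mmono])
      fix t assume t: "t \<in> {0<..c}"
      hence "D * t \<le> U * \<eta>" using Dpos by (simp add: c_def le_divide_eq mult.commute)
      hence "a \<in> C (t / \<eta>)" using mem[of t] t a by simp
      thus "h t = m t" using t unfolding hval m_def by auto
    next
      fix t assume t: "t \<in> {c<..\<beta>max}"
      hence "\<not> D * t \<le> U * \<eta>" using Dpos by (simp add: c_def divide_less_eq mult.commute)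
      moreover have "t > 0" using t c0 by simp
      ultimately have "a \<notin> C (t / \<eta>)" using mem[of t] by simp
      thus "h t = 0" unfolding hval by simp
    qed (use mL in auto)
    hence I: "\<eta> / real (card G) * (U / D) \<le> integral {0..\<beta>max} h" by (simp add: c_def mult.commute)
    have "(1 - \<beta>max) * unif_pol f pic U g (\<beta>max / \<eta>) x a \<ge> 0" using unif_nn \<beta>max by simp
    hence first: "mix_pol f pic U g \<beta>max \<eta> x a \<ge> \<eta> / real (card G) * (U / D)" using I mixeq by simp
    have "f x (pic x) \<le> 1" "f x a \<ge> 0" using f_range[OF pic_A] f_range[OF aA] by auto
    hence "D \<le> 1" unfolding D_def by simp
    hence "U \<le> U / D" using Dpos U_pos by (simp add: le_divide_eq)
    moreover have "\<eta> / real (card G) \<ge> 0" using \<eta> by simp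
    ultimately have "\<eta> / real (card G) * U \<le> \<eta> / real (card G) * (U / D)" by (rule mult_left_mono)
    thus "mix_pol f pic U g \<beta>max \<eta> x a \<ge> \<eta> / real (card G) * (U / D)
      \<and> \<eta> / real (card G) * (U / D) \<ge> \<eta> * U / real (card G)" using first by simp
  qed
  have P3: "mix_pol f pic U g \<beta>max \<eta> x a \<ge> 0"
  proof -
    have "integral {0..\<beta>max} h \<ge> 0"
    proof (cases "h integrable_on {0..\<beta>max}")
      case True thus ?thesis by (rule integral_nonneg) (simp add: hval)
    qed (simp add: not_integrable_integral)
    moreover have "(1 - \<beta>max) * unif_pol f pic U g (\<beta>max / \<eta>) x a \<ge> 0" using unif_nn \<beta>max by simp
    ultimately show ?thesis using mixeq by simp
  qed
  show ?thesis using P1 P2 P3 unfolding C_def G_def D_def by blast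
qed

end
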